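(* Let $G$ be a finite simple graph. The following are equivalent: (i) $G$ is a König–Egerváry graph; (ii) $\operatorname{diadem}(G) = \operatorname{corona}(G)$; (iii) $|\operatorname{diadem}(G)| + |\operatorname{nucleus}(G)| = 2\alpha(G)$.
   Context: For $X\subseteq V(G)$, $N(X)$ is the set of vertices adjacent to some vertex of $X$, and the difference of $X$ is $d(X)=|X|-|N(X)|$. A set $S\subseteq V(G)$ is independent if no two of its vertices are adjacent. An independent set $S$ is a critical independent set if $d(S)=\max\{d(X): X\subseteq V(G)\}$; the empty set may be critical. A maximum critical independent set is a critical independent set of maximum cardinality. $\operatorname{nucleus}(G)$ is the intersection of all maximum critical independent sets of $G$, and $\operatorname{diadem}(G)$ is their union. $\alpha(G)$ is the maximum size of an independent set, with $\alpha$ of the empty graph equal to $0$. $\operatorname{corona}(G)$ is the union of all maximum independent sets of $G$. $\mu(G)$ is the size of a maximum matching. $G$ is König–Egerváry if $\alpha(G)+\mu(G)=|V(G)|$; by convention the empty graph is König–Egerváry. *)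

theory Defs
  imports Main
begin

definition simple_graph :: "'a set \<Rightarrow> ('a \<Rightarrow> 'a \<Rightarrow> bool) \<Rightarrow> bool" where
  "simple_graph V E \<longleftrightarrow> finite V \<and> (\<forall>x y. E x y \<longrightarrow> x \<in> V \<and> y \<in> V)
     \<and> (\<forall>x y. E x y \<longrightarrow> E y x) \<and> (\<forall>x. \<not> E x x)"

definition nbhd :: "('a \<Rightarrow> 'a \<Rightarrow> bool) \<Rightarrow> 'a set \<Rightarrow> 'a set" where
  "nbhd E X = {y. \<exists>x\<in>X. E x y}"

definition difference :: "('a \<Rightarrow> 'a \<Rightarrow> bool) \<Rightarrow> 'a set \<Rightarrow> int" where
  "difference E X = int (card X) - int (card (nbhd E X))"

definition indep :: "'a set \<Rightarrow> ('a \<Rightarrow> 'a \<Rightarrow> bool) \<Rightarrow> 'a set \<Rightarrow> bool" where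
  "indep V E S \<longleftrightarrow> S \<subseteq> V \<and> (\<forall>x\<in>S. \<forall>y\<in>S. \<not> E x y)"

definition critical_indep :: "'a set \<Rightarrow> ('a \<Rightarrow> 'a \<Rightarrow> bool) \<Rightarrow> 'a set \<Rightarrow> bool" where
  "critical_indep V E S \<longleftrightarrow> indep V E S \<and>
     difference E S = Max {difference E X | X. X \<subseteq> V}"

definition max_critical_indep :: "'a set \<Rightarrow> ('a \<Rightarrow> 'a \<Rightarrow> bool) \<Rightarrow> 'a set \<Rightarrow> bool" where
  "max_critical_indep V E S \<longleftrightarrow> critical_indep V E S \<and>
     card S = Max {card T | T. critical_indep V E T}"

definition nucleus :: "'a set \<Rightarrow> ('a \<Rightarrow> 'a \<Rightarrow> bool) \<Rightarrow> 'a set" where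
  "nucleus V E = \<Inter> {S. max_critical_indep V E S}"

definition diadem :: "'a set \<Rightarrow> ('a \<Rightarrow> 'a \<Rightarrow> bool) \<Rightarrow> 'a set" where
  "diadem V E = \<Union> {S. max_critical_indep V E S}"

definition alpha :: "'a set \<Rightarrow> ('a \<Rightarrow> 'a \<Rightarrow> bool) \<Rightarrow> nat" where
  "alpha V E = Max {card S | S. indep V E S}"

definition corona :: "'a set \<Rightarrow> ('a \<Rightarrow> 'a \<Rightarrow> bool) \<Rightarrow> 'a set" where
  "corona V E = \<Union> {S. indep V E S \<and> card S = alpha V E}"

definition matching :: "('a \<Rightarrow> 'a \<Rightarrow> bool) \<Rightarrow> 'a set set \<Rightarrow> bool" where
  "matching E M \<longleftrightarrow> (\<forall>e\<in>M. \<exists>x y. E x y \<and> e = {x, y})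
     \<and> (\<forall>e\<in>M. \<forall>f\<in>M. e \<noteq> f \<longrightarrow> e \<inter> f = {})"

definition mu :: "'a set \<Rightarrow> ('a \<Rightarrow> 'a \<Rightarrow> bool) \<Rightarrow> nat" where
  "mu V E = Max {card M | M. matching E M}"

definition koenig_egervary :: "'a set \<Rightarrow> ('a \<Rightarrow> 'a \<Rightarrow> bool) \<Rightarrow> bool" where
  "koenig_egervary V E \<longleftrightarrow> alpha V E + mu V E = card V"

end

theory Submission
  imports Defs
begin


lemma hall:
  fixes A :: "'a set" and R :: "'a \<Rightarrow> 'b set"
  assumes "finite A" "\<And>x. x \<in> A \<Longrightarrow> finite (R x)"
    "\<And>B. B \<subseteq> A \<Longrightarrow> card B \<le> card (\<Union>(R ` B))"
  shows "\<exists>f. inj_on f A \<and> (\<forall>x\<in>A. f x \<in> R x)"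
  using assms
proof (induction "card A" arbitrary: A R rule: less_induct)
  case less
  show ?case
  proof (cases "A = {}")
    case True then show ?thesis by auto
  next
    case False
    show ?thesis
    proof (cases "\<exists>B. B \<subseteq> A \<and> B \<noteq> {} \<and> B \<noteq> A \<and> card (\<Union>(R ` B)) = card B")
      case True
      then obtain B where B: "B \<subseteq> A" "B \<noteq> {}" "B \<noteq> A" "card (\<Union>(R ` B)) = card B" by blast
      have fB: "finite B" using B(1) less.prems(1) finite_subset by blast
      have ltB: "card B < card A" using B less.prems(1) by (meson psubset_card_mono psubsetI)
      have "\<exists>f. inj_on f B \<and> (\<forall>x\<in>B. f x \<in> R x)"
      proof (rule less.hyps[of B R, OF ltB fB])
        show "\<And>x. x \<in> B \<Longrightarrow> finite (R x)" using less.prems(2) B(1) by blast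
        show "\<And>C. C \<subseteq> B \<Longrightarrow> card C \<le> card (\<Union>(R ` C))" using less.prems(3) B(1) by blast
      qed
      then obtain f where f: "inj_on f B" "\<forall>x\<in>B. f x \<in> R x" by blast
      define R' where "R' x = R x - \<Union>(R ` B)" for x
      have lt: "card (A - B) < card A" using B less.prems(1)
        by (metis Diff_subset card_Diff_subset card_gt_0_iff diff_less finite_subset fB subset_empty)
      have fin: "finite (R' x)" if "x \<in> A - B" for x using less.prems(2) that R'_def by auto
      have finU: "finite (\<Union>(R ` C))" if "C \<subseteq> A" for C
        using that less.prems(1,2) by (meson finite_UN_I finite_subset subsetD)
      have hall': "card C \<le> card (\<Union>(R' ` C))" if C: "C \<subseteq> A - B" for C
      proof -
        have eq: "\<Union>(R' ` C) = \<Union>(R ` (C \<union> B)) - \<Union>(R ` B)" unfolding R'_def by auto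
        have sub: "\<Union>(R ` B) \<subseteq> \<Union>(R ` (C \<union> B))" by auto
        have "card (\<Union>(R' ` C)) = card (\<Union>(R ` (C \<union> B))) - card (\<Union>(R ` B))"
          unfolding eq using sub finU B(1) by (meson card_Diff_subset finite_subset)
        moreover have "card (C \<union> B) \<le> card (\<Union>(R ` (C \<union> B)))"
          using less.prems(3)[of "C \<union> B"] C B(1) by blast
        moreover have "card (C \<union> B) = card C + card B"
          using C fB less.prems(1) by (meson Diff_subset card_Un_disjoint disjoint_iff DiffE finite_subset subset_iff)
        ultimately show ?thesis using B(4) by linarith
      qed
      have "\<exists>g. inj_on g (A - B) \<and> (\<forall>x\<in>A - B. g x \<in> R' x)"
        by (rule less.hyps[of "A - B" R', OF lt]) (use less.prems(1) fin hall' in auto)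
      then obtain g where g: "inj_on g (A - B)" "\<forall>x\<in>A - B. g x \<in> R' x" by blast
      define h where "h x = (if x \<in> B then f x else g x)" for x
      have "inj_on h A"
        unfolding inj_on_def
      proof (intro ballI impI)
        fix x y assume xy: "x \<in> A" "y \<in> A" "h x = h y"
        show "x = y"
        proof (cases "x \<in> B"; cases "y \<in> B")
          assume "x \<in> B" "y \<in> B" then show ?thesis using xy f(1) h_def by (auto dest: inj_onD)
        next
          assume "x \<notin> B" "y \<notin> B" then show ?thesis using xy g(1) h_def by (auto dest: inj_onD)
        next
          assume a: "x \<in> B" "y \<notin> B"
          have 1: "h x \<in> \<Union>(R ` B)" using a f(2) h_def by auto
          have 2: "h y \<notin> \<Union>(R ` B)" using a xy(2) g(2) h_def R'_def by auto
          note 1 2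
          then show ?thesis using xy by simp
        next
          assume a: "x \<notin> B" "y \<in> B"
          have 1: "h y \<in> \<Union>(R ` B)" using a f(2) h_def by auto
          have 2: "h x \<notin> \<Union>(R ` B)" using a xy(1) g(2) h_def R'_def by auto
          note 1 2
          then show ?thesis using xy by simp
        qed
      qed
      moreover have "\<forall>x\<in>A. h x \<in> R x" using f(2) g(2) h_def R'_def by auto
      ultimately show ?thesis by blast
    next
      case False2: False
      obtain a where a: "a \<in> A" using False by blast
      have "card {a} \<le> card (R a)" using less.prems(3)[of "{a}"] a by auto
      then have "R a \<noteq> {}" by auto
      then obtain b where b: "b \<in> R a" by blast
      define R' where "R' x = R x - {b}" for x
      have lt: "card (A - {a}) < card A" using a less.prems(1) by (metis card_Diff1_less)
      have hall': "card C \<le> card (\<Union>(R' ` C))" if C: "C \<subseteq> A - {a}" for C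
      proof (cases "C = {}")
        case True then show ?thesis by simp
      next
        case False
        have CA: "C \<subseteq> A" "C \<noteq> A" using C a by auto
        have "card C \<le> card (\<Union>(R ` C))" using less.prems(3) CA by blast
        moreover have "card (\<Union>(R ` C)) \<noteq> card C" using False2 CA False by blast
        moreover have "card (\<Union>(R ` C)) \<le> card (\<Union>(R' ` C)) + 1"
        proof -
          have "\<Union>(R ` C) \<subseteq> insert b (\<Union>(R' ` C))" unfolding R'_def by auto
          moreover have finR: "finite (\<Union>(R' ` C))" 
          proof (rule finite_UN_I)
            show "finite C" using CA less.prems(1) finite_subset by blast
            show "\<And>x. x \<in> C \<Longrightarrow> finite (R' x)" using CA less.prems(2) R'_def by auto
          qed
          ultimately have "card (\<Union>(R ` C)) \<le> card (insert b (\<Union>(R' ` C)))" by (meson card_mono finite_insert)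
          also have "\<dots> \<le> card (\<Union>(R' ` C)) + 1" using finR by (simp add: card_insert_if)
          finally show ?thesis .
        qed
        ultimately show ?thesis by linarith
      qed
      have "\<exists>g. inj_on g (A - {a}) \<and> (\<forall>x\<in>A - {a}. g x \<in> R' x)"
        by (rule less.hyps[of "A - {a}" R', OF lt]) (use less.prems(1,2) hall' R'_def in auto)
      then obtain g where g: "inj_on g (A - {a})" "\<forall>x\<in>A - {a}. g x \<in> R' x" by blast
      define h where "h = g(a := b)"
      have "inj_on h A"
      proof (rule inj_onI)
        fix x y assume xy: "x \<in> A" "y \<in> A" "h x = h y"
        have hb: "z \<in> A - {a} \<Longrightarrow> h z \<noteq> b" for z using g(2) R'_def h_def by auto
        show "x = y"
        proof (cases "x = a"; cases "y = a")
          assume "x \<noteq> a" "y \<noteq> a" then show ?thesis using xy g(1) h_def by (auto dest: inj_onD)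
        next
          assume "x = a" "y \<noteq> a" then show ?thesis using xy hb[of y] h_def by auto
        next
          assume "x \<noteq> a" "y = a" then show ?thesis using xy hb[of x] h_def by auto
        qed simp
      qed
      moreover have "\<forall>x\<in>A. h x \<in> R x" using g(2) b R'_def h_def by auto
      ultimately show ?thesis by blast
    qed
  qed
qed



locale sg =
  fixes V :: "'a set" and E :: "'a \<Rightarrow> 'a \<Rightarrow> bool"
  assumes sg: "simple_graph V E"
begin

lemma finV: "finite V" using sg unfolding simple_graph_def by blast
lemma edgeV: "E x y \<Longrightarrow> x \<in> V \<and> y \<in> V" using sg unfolding simple_graph_def by blast
lemma esym: "E x y \<Longrightarrow> E y x" using sg unfolding simple_graph_def by blast
lemma irr: "\<not> E x x" using sg unfolding simple_graph_def by blast

lemma nbhd_sub: "nbhd E X \<subseteq> V" unfolding nbhd_def using edgeV by blast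
lemma fin_nbhd: "finite (nbhd E X)" using nbhd_sub finV finite_subset by blast
lemma nbhd_mono: "X \<subseteq> Y \<Longrightarrow> nbhd E X \<subseteq> nbhd E Y" unfolding nbhd_def by blast
lemma nbhd_iff: "y \<in> nbhd E X \<longleftrightarrow> (\<exists>x\<in>X. E x y)" unfolding nbhd_def by blast

lemma indep_fin: "indep V E S \<Longrightarrow> finite S" unfolding indep_def using finV finite_subset by blast

lemma indep_nbhd_disj: "indep V E S \<Longrightarrow> S \<inter> nbhd E S = {}"
  unfolding indep_def nbhd_def by blast

definition dc :: int where "dc = Max {difference E X | X. X \<subseteq> V}"

lemma dc_set: "{difference E X | X. X \<subseteq> V} = difference E ` Pow V" by auto

lemma diff_le_dc: "X \<subseteq> V \<Longrightarrow> difference E X \<le> dc"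
  unfolding dc_def dc_set using finV by (intro Max_ge) auto

lemma dc_attained: "\<exists>X\<subseteq>V. difference E X = dc"
proof -
  have "dc \<in> difference E ` Pow V" unfolding dc_def dc_set using finV by (intro Max_in) auto
  then show ?thesis by auto
qed

lemma critical_iff: "critical_indep V E S \<longleftrightarrow> indep V E S \<and> difference E S = dc"
  unfolding critical_indep_def dc_def by simp

lemma crit_iff2: "critical_indep V E S \<longleftrightarrow> indep V E S \<and> difference E S \<ge> dc"
  using critical_iff diff_le_dc unfolding indep_def by force

lemma reduce:
  assumes X: "X \<subseteq> V"
  shows "indep V E (X - nbhd E X) \<and> difference E (X - nbhd E X) \<ge> difference E X"
proof -
  define I where "I = X - nbhd E X"
  have fX: "finite X" using X finV finite_subset by blast
  have ind: "indep V E I" unfolding indep_def I_def nbhd_def using X by blast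
  have sub: "nbhd E I \<subseteq> nbhd E X - X"
  proof
    fix y assume "y \<in> nbhd E I"
    then obtain x where x: "x \<in> I" "E x y" unfolding nbhd_def by blast
    then have "y \<in> nbhd E X" unfolding I_def nbhd_def by blast
    moreover have "y \<notin> X"
    proof
      assume "y \<in> X"
      then have "x \<in> nbhd E X" using esym[OF x(2)] unfolding nbhd_def by blast
      then show False using x(1) unfolding I_def by blast
    qed
    ultimately show "y \<in> nbhd E X - X" by blast
  qed
  have c1: "card (nbhd E I) \<le> card (nbhd E X - X)" using sub fin_nbhd by (simp add: card_mono)
  have c2: "card (nbhd E X - X) = card (nbhd E X) - card (nbhd E X \<inter> X)"
    using fin_nbhd by (simp add: card_Diff_subset_Int)
  have c3: "card (nbhd E X \<inter> X) \<le> card (nbhd E X)" using fin_nbhd by (simp add: card_mono)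
  have c4: "card X = card I + card (nbhd E X \<inter> X)"
  proof -
    have "X = I \<union> (nbhd E X \<inter> X)" "I \<inter> (nbhd E X \<inter> X) = {}" unfolding I_def by auto
    then show ?thesis using fX by (metis card_Un_disjoint finite_Int finite_Un)
  qed
  have "difference E I \<ge> difference E X"
    unfolding difference_def using c1 c2 c3 c4 by linarith
  then show ?thesis using ind I_def by simp
qed

lemma crit_exists: "\<exists>S. critical_indep V E S"
proof -
  obtain X where X: "X \<subseteq> V" "difference E X = dc" using dc_attained by blast
  then show ?thesis using reduce[OF X(1)] crit_iff2 by fastforce
qed

definition cc :: nat where "cc = Max {card T | T. critical_indep V E T}"

lemma cc_fin: "finite {card T | T. critical_indep V E T}"
proof -
  have "{card T | T. critical_indep V E T} \<subseteq> {..card V}"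
    using finV unfolding critical_indep_def indep_def by (auto intro: card_mono)
  then show ?thesis using finite_subset by blast
qed

lemma crit_le_cc: "critical_indep V E T \<Longrightarrow> card T \<le> cc"
  unfolding cc_def using cc_fin by (intro Max_ge) auto

lemma max_crit_iff: "max_critical_indep V E S \<longleftrightarrow> critical_indep V E S \<and> card S = cc"
  unfolding max_critical_indep_def cc_def by simp

lemma max_crit_exists: "\<exists>S. max_critical_indep V E S"
proof -
  have "cc \<in> {card T | T. critical_indep V E T}"
    unfolding cc_def using cc_fin crit_exists by (intro Max_in) auto
  then show ?thesis using max_crit_iff by auto
qed

lemma alpha_fin: "finite {card S | S. indep V E S}"
proof -
  have "{card S | S. indep V E S} \<subseteq> {..card V}"
    using finV unfolding indep_def by (auto intro: card_mono)
  then show ?thesis using finite_subset by blast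
qed

lemma indep_le_alpha: "indep V E S \<Longrightarrow> card S \<le> alpha V E"
  unfolding alpha_def using alpha_fin by (intro Max_ge) auto

lemma alpha_attained: "\<exists>S. indep V E S \<and> card S = alpha V E"
proof -
  have "indep V E {}" unfolding indep_def by simp
  then have "alpha V E \<in> {card S | S. indep V E S}"
    unfolding alpha_def using alpha_fin by (intro Max_in) auto
  then show ?thesis by auto
qed

lemma cc_le_alpha: "cc \<le> alpha V E"
  using max_crit_exists max_crit_iff indep_le_alpha critical_iff by metis

lemma crit_hall:
  assumes S: "critical_indep V E S"
  shows "\<exists>m. inj_on m (nbhd E S) \<and> (\<forall>x\<in>nbhd E S. m x \<in> S \<and> E x (m x))"
proof -
  have indS: "indep V E S" and dS: "difference E S = dc" using S critical_iff by auto
  have fS: "finite S" using indS indep_fin by blast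
  have "\<exists>m. inj_on m (nbhd E S) \<and> (\<forall>x\<in>nbhd E S. m x \<in> {s\<in>S. E x s})"
  proof (rule hall)
    show "finite (nbhd E S)" by (rule fin_nbhd)
    show "\<And>x. x \<in> nbhd E S \<Longrightarrow> finite {s \<in> S. E x s}" using fS by simp
    fix B assume B: "B \<subseteq> nbhd E S"
    define W where "W = (\<Union>x\<in>B. {s \<in> S. E x s})"
    define S' where "S' = S - W"
    have WS: "W \<subseteq> S" unfolding W_def by blast
    have S'V: "S' \<subseteq> V" using indS unfolding S'_def indep_def by blast
    have sub: "nbhd E S' \<subseteq> nbhd E S - B"
    proof
      fix y assume y: "y \<in> nbhd E S'"
      then obtain s where s: "s \<in> S'" "E s y" unfolding nbhd_def by blast
      have "y \<notin> B"
      proof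
        assume "y \<in> B"
        then have "s \<in> W" using s esym[OF s(2)] unfolding W_def S'_def by blast
        then show False using s(1) unfolding S'_def by blast
      qed
      moreover have "y \<in> nbhd E S" using y nbhd_mono[of S' S] unfolding S'_def by blast
      ultimately show "y \<in> nbhd E S - B" by blast
    qed
    have c1: "card (nbhd E S') \<le> card (nbhd E S) - card B"
    proof -
      have "card (nbhd E S') \<le> card (nbhd E S - B)" using sub fin_nbhd by (simp add: card_mono)
      also have "\<dots> = card (nbhd E S) - card B" using B fin_nbhd
        by (meson card_Diff_subset finite_subset)
      finally show ?thesis .
    qed
    have c2: "card B \<le> card (nbhd E S)" using B fin_nbhd by (simp add: card_mono)
    have c3: "card S' = card S - card W" unfolding S'_def using WS fS
      by (meson card_Diff_subset finite_subset)
    have c4: "card W \<le> card S" using WS fS by (simp add: card_mono)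
    have "difference E S' \<le> dc" using diff_le_dc S'V by blast
    then have "int (card S') - int (card (nbhd E S')) \<le> int (card S) - int (card (nbhd E S))"
      using dS unfolding difference_def by simp
    then show "card B \<le> card (\<Union>x\<in>B. {s \<in> S. E x s})"
      using c1 c2 c3 c4 unfolding W_def[symmetric] by linarith
  qed
  then show ?thesis by blast
qed

end


lemma counting:
  assumes fU: "finite U" and fD: "finite D" and inj: "inj_on m D"
    and dj1: "m ` D \<inter> D = {}" and dj2: "U \<inter> (D \<union> m ` D) = {}" and ne: "\<Gamma> \<noteq> {}"
    and str: "\<And>T. T \<in> \<Gamma> \<Longrightarrow> T \<subseteq> U \<union> D \<union> m ` D \<and> U \<subseteq> T \<and> (\<forall>x\<in>D. x \<in> T \<longleftrightarrow> m x \<notin> T)"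
  shows "card (\<Union>\<Gamma>) + card (\<Inter>\<Gamma>) = 2 * card U + 2 * card D"
proof -
  define D1 where "D1 = {x\<in>D. \<exists>T\<in>\<Gamma>. x \<in> T}"
  define D2 where "D2 = {x\<in>D. \<exists>T\<in>\<Gamma>. m x \<in> T}"
  obtain T0 where T0: "T0 \<in> \<Gamma>" using ne by blast
  have un: "\<Union>\<Gamma> = U \<union> D1 \<union> m ` D2"
  proof
    show "\<Union>\<Gamma> \<subseteq> U \<union> D1 \<union> m ` D2"
    proof
      fix y assume "y \<in> \<Union>\<Gamma>"
      then obtain T where T: "T \<in> \<Gamma>" "y \<in> T" by blast
      then have "y \<in> U \<union> D \<union> m ` D" using str by blast
      then show "y \<in> U \<union> D1 \<union> m ` D2" using T unfolding D1_def D2_def by blast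
    qed
    show "U \<union> D1 \<union> m ` D2 \<subseteq> \<Union>\<Gamma>"
      using str T0 unfolding D1_def D2_def by blast
  qed
  have int: "\<Inter>\<Gamma> = U \<union> (D - D2) \<union> m ` (D - D1)"
  proof
    show "\<Inter>\<Gamma> \<subseteq> U \<union> (D - D2) \<union> m ` (D - D1)"
    proof
      fix y assume y: "y \<in> \<Inter>\<Gamma>"
      then have "y \<in> T0" using T0 by blast
      then have "y \<in> U \<union> D \<union> m ` D" using str T0 by blast
      moreover have "y \<in> D \<Longrightarrow> y \<notin> D2" using y str unfolding D2_def by blast
      moreover have "x \<in> D \<Longrightarrow> y = m x \<Longrightarrow> x \<notin> D1" for x using y str unfolding D1_def by blast
      ultimately show "y \<in> U \<union> (D - D2) \<union> m ` (D - D1)" by blast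
    qed
    show "U \<union> (D - D2) \<union> m ` (D - D1) \<subseteq> \<Inter>\<Gamma>"
    proof
      fix y assume y: "y \<in> U \<union> (D - D2) \<union> m ` (D - D1)"
      show "y \<in> \<Inter>\<Gamma>"
      proof
        fix T assume T: "T \<in> \<Gamma>"
        show "y \<in> T"
        proof -
          have "y \<in> U \<Longrightarrow> y \<in> T" using str T by blast
          moreover have "y \<in> D - D2 \<Longrightarrow> y \<in> T" using str[OF T] T unfolding D2_def by blast
          moreover have "x \<in> D - D1 \<Longrightarrow> m x \<in> T" for x using str[OF T] T unfolding D1_def by blast
          ultimately show ?thesis using y by blast
        qed
      qed
    qed
  qed
  have D1D: "D1 \<subseteq> D" and D2D: "D2 \<subseteq> D" unfolding D1_def D2_def by auto
  have fD1: "finite D1" and fD2: "finite D2" using D1D D2D fD finite_subset by auto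
  have cm2: "card (m ` D2) = card D2" using inj D2D by (meson card_image inj_on_subset)
  have cm1: "card (m ` (D - D1)) = card (D - D1)" using inj by (meson card_image inj_on_subset Diff_subset)
  have "card (\<Union>\<Gamma>) = card U + card D1 + card D2"
  proof -
    have "card (U \<union> D1 \<union> m ` D2) = card (U \<union> D1) + card (m ` D2)"
    proof (rule card_Un_disjoint)
      show "(U \<union> D1) \<inter> m ` D2 = {}" using dj1 dj2 D1D D2D by blast
    qed (use fU fD1 fD2 in auto)
    moreover have "card (U \<union> D1) = card U + card D1"
      by (rule card_Un_disjoint) (use fU fD1 dj2 D1D in auto)
    ultimately show ?thesis using un cm2 by simp
  qed
  moreover have "card (\<Inter>\<Gamma>) = card U + (card D - card D2) + (card D - card D1)"
  proof -
    have "card (U \<union> (D - D2) \<union> m ` (D - D1)) = card (U \<union> (D - D2)) + card (m ` (D - D1))"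
    proof (rule card_Un_disjoint)
      show "(U \<union> (D - D2)) \<inter> m ` (D - D1) = {}" using dj1 dj2 by blast
    qed (use fU fD in auto)
    moreover have "card (U \<union> (D - D2)) = card U + card (D - D2)"
      by (rule card_Un_disjoint) (use fU fD dj2 in auto)
    moreover have "card (D - D2) = card D - card D2" using D2D fD2 by (simp add: card_Diff_subset)
    moreover have "card (D - D1) = card D - card D1" using D1D fD1 by (simp add: card_Diff_subset)
    ultimately show ?thesis using int cm1 by simp
  qed
  moreover have "card D1 \<le> card D" "card D2 \<le> card D" using D1D D2D fD by (auto intro: card_mono)
  ultimately show ?thesis by linarith
qed

context sg begin

lemma crit_in_X:
  assumes S: "max_critical_indep V E S"
    and m: "inj_on m (nbhd E S)" "\<forall>x\<in>nbhd E S. m x \<in> S \<and> E x (m x)"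
    and T: "critical_indep V E T"
  shows "T \<subseteq> S \<union> nbhd E S"
proof -
  have indS: "indep V E S" and dS: "difference E S = dc" and cS: "card S = cc"
    using S max_crit_iff critical_iff by auto
  have indT: "indep V E T" and dT: "difference E T = dc" using T critical_iff by auto
  define A where "A = T - (S \<union> nbhd E S)"
  define B where "B = T \<inter> nbhd E S"
  define C where "C = T \<inter> S"
  have fT: "finite T" using indT indep_fin by blast
  have fS: "finite S" using indS indep_fin by blast
  have fA: "finite A" and fB: "finite B" and fC: "finite C" using fT unfolding A_def B_def C_def by auto
  have Tpart: "T = A \<union> B \<union> C" unfolding A_def B_def C_def by blast
  have SN: "S \<inter> nbhd E S = {}" using indep_nbhd_disj indS by blast
  have cT: "card T = card A + card B + card C"
  proof -
    have "card (A \<union> B \<union> C) = card (A \<union> B) + card C"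
      by (rule card_Un_disjoint) (use fA fB fC SN in \<open>auto simp: A_def B_def C_def\<close>)
    moreover have "card (A \<union> B) = card A + card B"
      by (rule card_Un_disjoint) (use fA fB fC SN in \<open>auto simp: A_def B_def C_def\<close>)
    ultimately show ?thesis using Tpart by simp
  qed
  have CS: "C \<subseteq> S" and CV: "C \<subseteq> V" using indS unfolding C_def indep_def by auto
  have dC: "difference E C \<le> dc" using diff_le_dc CV by blast
  have NCT: "nbhd E C \<subseteq> nbhd E T" using nbhd_mono[of C T] unfolding C_def by blast
  have cNTC: "card (nbhd E T - nbhd E C) = card (nbhd E T) - card (nbhd E C)"
    using NCT fin_nbhd by (simp add: card_Diff_subset)
  have cNC: "card (nbhd E C) \<le> card (nbhd E T)" using NCT fin_nbhd by (simp add: card_mono)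
  have key1: "card (nbhd E T - nbhd E C) \<le> card A + card B + (card C - card C)"
  proof -
    have "int (card C) - int (card (nbhd E C)) \<le> int (card T) - int (card (nbhd E T))"
      using dC dT unfolding difference_def by simp
    then show ?thesis using cNTC cNC cT by linarith
  qed
  have sub1: "(nbhd E A - nbhd E S) \<union> m ` B \<subseteq> nbhd E T - nbhd E C"
  proof
    fix y assume "y \<in> (nbhd E A - nbhd E S) \<union> m ` B"
    then show "y \<in> nbhd E T - nbhd E C"
    proof
      assume y: "y \<in> nbhd E A - nbhd E S"
      then have "y \<in> nbhd E T" using nbhd_mono[of A T] unfolding A_def by blast
      moreover have "y \<notin> nbhd E C" using y nbhd_mono[OF CS] by blast
      ultimately show ?thesis by blast
    next
      assume "y \<in> m ` B"
      then obtain x where x: "x \<in> B" "y = m x" by blast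
      have my: "y \<in> S" "E x y" using m(2) x unfolding B_def by auto
      have "y \<in> nbhd E T" using x my unfolding B_def nbhd_def by blast
      moreover have "y \<notin> nbhd E C"
      proof
        assume "y \<in> nbhd E C"
        then obtain c where "c \<in> C" "E c y" unfolding nbhd_def by blast
        then show False using indS my CS unfolding indep_def by blast
      qed
      ultimately show ?thesis by blast
    qed
  qed
  have dj: "(nbhd E A - nbhd E S) \<inter> m ` B = {}"
  proof -
    have "m ` B \<subseteq> S" using m(2) unfolding B_def by auto
    moreover have "nbhd E A \<inter> S = {}"
    proof (rule ccontr)
      assume "nbhd E A \<inter> S \<noteq> {}"
      then obtain a s where "a \<in> A" "s \<in> S" "E a s" unfolding nbhd_def by blast
      then have "a \<in> nbhd E S" using esym unfolding nbhd_def by blast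
      then show False using \<open>a \<in> A\<close> unfolding A_def by blast
    qed
    ultimately show ?thesis by blast
  qed
  have cmB: "card (m ` B) = card B" using m(1) by (metis B_def card_image inj_on_subset inf_le2)
  have key2: "card (nbhd E A - nbhd E S) + card B \<le> card A + card B"
  proof -
    have "card ((nbhd E A - nbhd E S) \<union> m ` B) = card (nbhd E A - nbhd E S) + card (m ` B)"
      by (rule card_Un_disjoint) (use fin_nbhd fB dj in auto)
    moreover have "card ((nbhd E A - nbhd E S) \<union> m ` B) \<le> card (nbhd E T - nbhd E C)"
      using sub1 fin_nbhd by (simp add: card_mono)
    ultimately show ?thesis using key1 cmB by simp
  qed
  have indSA: "indep V E (S \<union> A)"
  proof -
    have "A \<subseteq> V" using indT unfolding A_def indep_def by blast
    moreover have "\<not> E x y" if "x \<in> S \<union> A" "y \<in> S \<union> A" for x y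
    proof
      assume e: "E x y"
      have "A \<inter> nbhd E S = {}" unfolding A_def by blast
      then show False using that e esym[OF e] indS indT unfolding indep_def A_def nbhd_def
        by blast
    qed
    ultimately show ?thesis using indS unfolding indep_def by blast
  qed
  have NSA: "nbhd E (S \<union> A) = nbhd E S \<union> (nbhd E A - nbhd E S)" unfolding nbhd_def by blast
  have cNSA: "card (nbhd E (S \<union> A)) = card (nbhd E S) + card (nbhd E A - nbhd E S)"
    unfolding NSA by (rule card_Un_disjoint) (use fin_nbhd in auto)
  have cSA: "card (S \<union> A) = card S + card A"
    by (rule card_Un_disjoint) (use fS fA in \<open>auto simp: A_def\<close>)
  have "difference E (S \<union> A) \<ge> dc"
    using dS key2 cNSA cSA unfolding difference_def by linarith
  then have "critical_indep V E (S \<union> A)" using crit_iff2 indSA by blast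
  then have "card (S \<union> A) \<le> cc" by (rule crit_le_cc)
  then have "card A = 0" using cSA cS by linarith
  then have "A = {}" using fA by simp
  then show ?thesis unfolding A_def using Tpart by blast
qed

end


context sg begin

lemma max_struct:
  assumes S: "max_critical_indep V E S"
    and m: "inj_on m (nbhd E S)" "\<forall>x\<in>nbhd E S. m x \<in> S \<and> E x (m x)"
    and T: "max_critical_indep V E T"
  shows "S - m ` nbhd E S \<subseteq> T \<and> (\<forall>x\<in>nbhd E S. x \<in> T \<longleftrightarrow> m x \<notin> T)"
proof -
  define D where "D = nbhd E S"
  define U where "U = S - m ` D"
  define MD where "MD = m ` D"
  have indS: "indep V E S" and cS: "card S = cc" using S max_crit_iff critical_iff by auto
  have indT: "indep V E T" and cT: "card T = cc" using T max_crit_iff critical_iff by auto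
  have TX: "T \<subseteq> S \<union> D" unfolding D_def
    using crit_in_X[OF S m] T max_crit_iff by blast
  have fS: "finite S" using indS indep_fin by blast
  have fT: "finite T" using indT indep_fin by blast
  have fD: "finite D" unfolding D_def by (rule fin_nbhd)
  have SN: "S \<inter> D = {}" unfolding D_def using indep_nbhd_disj indS by blast
  have MDS: "MD \<subseteq> S" unfolding MD_def D_def using m(2) by auto
  have fU: "finite U" and fMD: "finite MD" using fS MDS unfolding U_def by (auto intro: finite_subset)
  have cMD: "card MD = card D" unfolding MD_def D_def using m(1) by (simp add: card_image)
  have cSU: "card S = card U + card MD"
  proof -
    have "S = U \<union> MD" "U \<inter> MD = {}" using MDS unfolding U_def MD_def by auto
    then show ?thesis using fU fMD by (metis card_Un_disjoint)
  qed
  define P where "P = T \<inter> MD"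
  define Q where "Q = m ` (T \<inter> D)"
  have cQ: "card Q = card (T \<inter> D)" unfolding Q_def D_def using m(1)
    by (meson card_image inj_on_subset inf_le2)
  have PQ: "P \<inter> Q = {}"
  proof (rule ccontr)
    assume "P \<inter> Q \<noteq> {}"
    then obtain x where x: "x \<in> T" "x \<in> D" "m x \<in> T" unfolding P_def Q_def by blast
    then have "E x (m x)" using m(2) unfolding D_def by blast
    then show False using x indT unfolding indep_def by blast
  qed
  have PQsub: "P \<union> Q \<subseteq> MD" unfolding P_def Q_def MD_def by blast
  have fP: "finite P" and fQ: "finite Q" using PQsub fMD finite_subset by auto
  have cPQ: "card (P \<union> Q) = card P + card Q" using fP fQ PQ by (simp add: card_Un_disjoint)
  have cPQle: "card (P \<union> Q) \<le> card MD" using PQsub fMD by (simp add: card_mono)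
  have cTsplit: "card T = card (T \<inter> U) + card P + card (T \<inter> D)"
  proof -
    have e: "T = (T \<inter> U) \<union> P \<union> (T \<inter> D)" using TX MDS unfolding U_def P_def MD_def by blast
    have "card ((T \<inter> U) \<union> P \<union> (T \<inter> D)) = card ((T \<inter> U) \<union> P) + card (T \<inter> D)"
    proof (rule card_Un_disjoint)
      show "(T \<inter> U \<union> P) \<inter> (T \<inter> D) = {}" using SN MDS unfolding U_def P_def by blast
    qed (use fT fP in auto)
    moreover have "card ((T \<inter> U) \<union> P) = card (T \<inter> U) + card P"
    proof (rule card_Un_disjoint)
      show "T \<inter> U \<inter> P = {}" unfolding U_def P_def MD_def by blast
    qed (use fT fP in auto)
    ultimately show ?thesis using e by simp
  qed
  have cTU: "card (T \<inter> U) \<le> card U" using fU by (simp add: card_mono)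
  have eq1: "card (T \<inter> U) = card U" and eq2: "card (P \<union> Q) = card MD"
    using cTsplit cSU cPQ cPQle cTU cS cT cQ cMD by linarith+
  have "T \<inter> U = U" using eq1 fU by (simp add: card_subset_eq)
  then have UT: "U \<subseteq> T" by blast
  have PQe: "P \<union> Q = MD" using eq2 PQsub fMD by (simp add: card_subset_eq)
  have "\<forall>x\<in>D. x \<in> T \<longleftrightarrow> m x \<notin> T"
  proof
    fix x assume x: "x \<in> D"
    have exm: "E x (m x)" using m(2) x unfolding D_def by blast
    have "m x \<in> P \<union> Q" using PQe x unfolding MD_def by blast
    then show "x \<in> T \<longleftrightarrow> m x \<notin> T"
    proof
      assume "m x \<in> P"
      then have "m x \<in> T" unfolding P_def by blast
      then show ?thesis using exm indT unfolding indep_def by blast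
    next
      assume "m x \<in> Q"
      then obtain y where y: "y \<in> T" "y \<in> D" "m x = m y" unfolding Q_def by blast
      then have "x = y" using m(1) x unfolding D_def by (meson inj_onD)
      then show ?thesis using y exm indT unfolding indep_def by blast
    qed
  qed
  then show ?thesis using UT unfolding U_def D_def by blast
qed

lemma diadem_nucleus:
  shows "card (diadem V E) + card (nucleus V E) = 2 * cc"
proof -
  obtain S where S: "max_critical_indep V E S" using max_crit_exists by blast
  have Sc: "critical_indep V E S" and cS: "card S = cc" using S max_crit_iff by auto
  have indS: "indep V E S" using Sc critical_iff by blast
  obtain m where m: "inj_on m (nbhd E S)" "\<forall>x\<in>nbhd E S. m x \<in> S \<and> E x (m x)"
    using crit_hall[OF Sc] by blast
  define D where "D = nbhd E S"
  define U where "U = S - m ` D"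
  have fS: "finite S" using indS indep_fin by blast
  have SN: "S \<inter> D = {}" unfolding D_def using indep_nbhd_disj indS by blast
  have MDS: "m ` D \<subseteq> S" unfolding D_def using m(2) by auto
  have "card (\<Union>{T. max_critical_indep V E T}) + card (\<Inter>{T. max_critical_indep V E T})
        = 2 * card U + 2 * card D"
  proof (rule counting)
    show "finite U" using fS unfolding U_def by simp
    show "finite D" unfolding D_def by (rule fin_nbhd)
    show "inj_on m D" using m(1) unfolding D_def .
    show "m ` D \<inter> D = {}" using SN MDS by blast
    show "U \<inter> (D \<union> m ` D) = {}" using SN unfolding U_def by blast
    show "{T. max_critical_indep V E T} \<noteq> {}" using S by blast
    fix T assume T: "T \<in> {T. max_critical_indep V E T}"
    then have "T \<subseteq> S \<union> D" unfolding D_def using crit_in_X[OF S m] max_crit_iff by blast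
    then have "T \<subseteq> U \<union> D \<union> m ` D" unfolding U_def by blast
    then show "T \<subseteq> U \<union> D \<union> m ` D \<and> U \<subseteq> T \<and> (\<forall>x\<in>D. (x \<in> T) = (m x \<notin> T))"
      using max_struct[OF S m] T unfolding U_def D_def by blast
  qed
  moreover have "card S = card U + card D"
  proof -
    have "S = U \<union> m ` D" "U \<inter> m ` D = {}" using MDS unfolding U_def by auto
    moreover have "card (m ` D) = card D" unfolding D_def using m(1) by (simp add: card_image)
    ultimately show ?thesis using fS by (metis card_Un_disjoint finite_Un)
  qed
  ultimately show ?thesis unfolding diadem_def nucleus_def using cS by simp
qed

lemma diadem_sub_X:
  assumes S: "max_critical_indep V E S"
    and m: "inj_on m (nbhd E S)" "\<forall>x\<in>nbhd E S. m x \<in> S \<and> E x (m x)"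
  shows "diadem V E \<subseteq> S \<union> nbhd E S"
  unfolding diadem_def using crit_in_X[OF S m] max_crit_iff by blast

lemma corona_outside:
  assumes S: "max_critical_indep V E S"
    and m: "inj_on m (nbhd E S)" "\<forall>x\<in>nbhd E S. m x \<in> S \<and> E x (m x)"
    and lt: "cc < alpha V E"
  shows "\<not> corona V E \<subseteq> S \<union> nbhd E S"
proof
  assume cor: "corona V E \<subseteq> S \<union> nbhd E S"
  obtain I where I: "indep V E I" "card I = alpha V E" using alpha_attained by blast
  have IX: "I \<subseteq> S \<union> nbhd E S" using cor I unfolding corona_def by blast
  have indS: "indep V E S" and cS: "card S = cc" using S max_crit_iff critical_iff by auto
  have fS: "finite S" using indS indep_fin by blast
  have fI: "finite I" using I indep_fin by blast
  have c1: "card I \<le> card (I \<inter> S) + card (I \<inter> nbhd E S)"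
  proof -
    have "I = (I \<inter> S) \<union> (I \<inter> nbhd E S)" using IX by blast
    then have "card I = card ((I \<inter> S) \<union> (I \<inter> nbhd E S))" by simp
    also have "\<dots> \<le> card (I \<inter> S) + card (I \<inter> nbhd E S)" by (rule card_Un_le)
    finally show ?thesis .
  qed
  have sub: "m ` (I \<inter> nbhd E S) \<subseteq> S - I"
  proof
    fix y assume "y \<in> m ` (I \<inter> nbhd E S)"
    then obtain x where x: "x \<in> I" "x \<in> nbhd E S" "y = m x" by blast
    then have "y \<in> S" "E x y" using m(2) by auto
    then show "y \<in> S - I" using x I(1) unfolding indep_def by blast
  qed
  have c2: "card (I \<inter> nbhd E S) \<le> card (S - I)"
  proof -
    have "card (m ` (I \<inter> nbhd E S)) = card (I \<inter> nbhd E S)" using m(1)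
      by (meson card_image inj_on_subset inf_le2)
    moreover have "card (m ` (I \<inter> nbhd E S)) \<le> card (S - I)" using sub fS by (simp add: card_mono)
    ultimately show ?thesis by simp
  qed
  have c3: "card (I \<inter> S) + card (S - I) = card S"
  proof -
    have "S = (I \<inter> S) \<union> (S - I)" by blast
    then show ?thesis using fS by (metis card_Un_disjoint finite_Diff finite_Int Diff_disjoint inf_commute
          Int_Diff_disjoint)
  qed
  show False using c1 c2 c3 cS lt I(2) by linarith
qed

end


context sg begin

lemma matching_edge: "matching E M \<Longrightarrow> e \<in> M \<Longrightarrow> \<exists>x y. E x y \<and> e = {x, y}"
  unfolding matching_def by (drule conjunct1) (erule bspec)

lemma matching_disj: "matching E M \<Longrightarrow> e \<in> M \<Longrightarrow> f \<in> M \<Longrightarrow> e \<noteq> f \<Longrightarrow> e \<inter> f = {}"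
  unfolding matching_def by (drule conjunct2) blast

lemma matching_sub: "matching E M \<Longrightarrow> M \<subseteq> Pow V"
proof
  fix e assume "matching E M" "e \<in> M"
  then obtain x y where "E x y" "e = {x, y}" using matching_edge by blast
  then show "e \<in> Pow V" using edgeV[of x y] by auto
qed

lemma matching_fin: "matching E M \<Longrightarrow> finite M"
proof -
  assume "matching E M"
  then have "M \<subseteq> Pow V" by (rule matching_sub)
  moreover have "finite (Pow V)" using finV by simp
  ultimately show "finite M" by (rule finite_subset)
qed

lemma card_inter_Union:
  assumes M: "matching E M"
  shows "card (Y \<inter> \<Union>M) = (\<Sum>e\<in>M. card (Y \<inter> e))"
proof -
  have "Y \<inter> \<Union>M = \<Union>((\<lambda>e. Y \<inter> e) ` M)" by blast
  moreover have "card (\<Union>((\<lambda>e. Y \<inter> e) ` M)) = (\<Sum>e\<in>M. card (Y \<inter> e))"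
  proof (rule card_UN_disjoint)
    show "finite M" using M by (rule matching_fin)
    show "\<forall>e\<in>M. finite (Y \<inter> e)" using matching_edge[OF M] by fastforce
    show "\<forall>i\<in>M. \<forall>j\<in>M. i \<noteq> j \<longrightarrow> Y \<inter> i \<inter> (Y \<inter> j) = {}" using matching_disj[OF M] by blast
  qed
  ultimately show ?thesis by simp
qed

lemma card_Union_M:
  assumes M: "matching E M"
  shows "card (\<Union>M) = 2 * card M"
proof -
  have "\<Union>M \<subseteq> V" using matching_sub[OF M] by blast
  then have "card (\<Union>M) = card (V \<inter> \<Union>M)" by (simp add: Int_absorb1)
  also have "\<dots> = (\<Sum>e\<in>M. card (V \<inter> e))" by (rule card_inter_Union[OF M])
  also have "\<dots> = (\<Sum>e\<in>M. 2)"
  proof (rule sum.cong)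
    fix e assume "e \<in> M"
    then obtain x y where "E x y" "e = {x, y}" using matching_edge[OF M] by blast
    moreover have "x \<noteq> y" using \<open>E x y\<close> irr by blast
    moreover have "x \<in> V" "y \<in> V" using edgeV \<open>E x y\<close> by auto
    ultimately show "card (V \<inter> e) = 2" by (simp add: Int_absorb1)
  qed simp
  finally show ?thesis by simp
qed

lemma mu_fin: "finite {card M | M. matching E M}"
proof -
  have "{card M | M. matching E M} \<subseteq> {..card (Pow V)}"
    using matching_sub finV by (auto intro: card_mono)
  then show ?thesis using finite_subset by blast
qed

lemma matching_le_mu: "matching E M \<Longrightarrow> card M \<le> mu V E"
  unfolding mu_def using mu_fin by (intro Max_ge) auto

lemma mu_attained: "\<exists>M. matching E M \<and> card M = mu V E"
proof -
  have "matching E {}" unfolding matching_def by simp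
  then have "mu V E \<in> {card M | M. matching E M}"
    unfolding mu_def using mu_fin by (intro Max_in) auto
  then show ?thesis by auto
qed

lemma card_split_M:
  assumes M: "matching E M" and X: "X \<subseteq> V"
  shows "card X \<le> card (X \<inter> \<Union>M) + (card V - 2 * card M)"
proof -
  have fX: "finite X" using X finV finite_subset by blast
  have UV: "\<Union>M \<subseteq> V" using matching_sub[OF M] by blast
  have "card X = card (X \<inter> \<Union>M) + card (X - \<Union>M)"
  proof -
    have "X = (X \<inter> \<Union>M) \<union> (X - \<Union>M)" by blast
    moreover have "card ((X \<inter> \<Union>M) \<union> (X - \<Union>M)) = card (X \<inter> \<Union>M) + card (X - \<Union>M)"
      by (rule card_Un_disjoint) (use fX in auto)
    ultimately show ?thesis by simp
  qed
  moreover have "card (X - \<Union>M) \<le> card (V - \<Union>M)" using X finV by (intro card_mono) auto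
  moreover have "card (V - \<Union>M) = card V - card (\<Union>M)" using UV finV
    by (meson card_Diff_subset finite_subset)
  ultimately show ?thesis using card_Union_M[OF M] by linarith
qed

lemma diff_bound:
  assumes M: "matching E M" and X: "X \<subseteq> V"
  shows "card X \<le> card (nbhd E X) + (card V - 2 * card M)"
proof -
  have "card (X \<inter> \<Union>M) = (\<Sum>e\<in>M. card (X \<inter> e))" by (rule card_inter_Union[OF M])
  also have "\<dots> \<le> (\<Sum>e\<in>M. card (nbhd E X \<inter> e))"
  proof (rule sum_mono)
    fix e assume "e \<in> M"
    then obtain x y where xy: "E x y" "e = {x, y}" using matching_edge[OF M] by blast
    have yx: "E y x" using esym[OF xy(1)] .
    have ne: "x \<noteq> y" using xy(1) irr by blast
    show "card (X \<inter> e) \<le> card (nbhd E X \<inter> e)"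
    proof (cases "x \<in> X"; cases "y \<in> X")
      assume "x \<in> X" "y \<in> X"
      then have "X \<inter> e \<subseteq> nbhd E X \<inter> e" using xy yx unfolding nbhd_def by blast
      then show ?thesis using xy(2) by (intro card_mono) auto
    next
      assume a: "x \<in> X" "y \<notin> X"
      then have "X \<inter> e = {x}" "y \<in> nbhd E X \<inter> e" using xy unfolding nbhd_def by auto
      moreover have "finite (nbhd E X \<inter> e)" using xy(2) by simp
      ultimately have "0 < card (nbhd E X \<inter> e)" by (auto simp: card_gt_0_iff)
      then show ?thesis using \<open>X \<inter> e = _\<close> by simp
    next
      assume a: "x \<notin> X" "y \<in> X"
      then have "X \<inter> e = {y}" "x \<in> nbhd E X \<inter> e" using xy yx unfolding nbhd_def by auto
      moreover have "finite (nbhd E X \<inter> e)" using xy(2) by simp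
      ultimately have "0 < card (nbhd E X \<inter> e)" by (auto simp: card_gt_0_iff)
      then show ?thesis using \<open>X \<inter> e = _\<close> by simp
    next
      assume a: "x \<notin> X" "y \<notin> X"
      then have "X \<inter> e = {}" using xy by auto
      then show ?thesis by simp
    qed
  qed
  also have "\<dots> = card (nbhd E X \<inter> \<Union>M)" by (rule card_inter_Union[OF M, symmetric])
  also have "\<dots> \<le> card (nbhd E X)" using fin_nbhd by (simp add: card_mono)
  finally show ?thesis using card_split_M[OF M X] by linarith
qed

lemma alpha_mu: "alpha V E + mu V E \<le> card V"
proof -
  obtain I where I: "indep V E I" "card I = alpha V E" using alpha_attained by blast
  obtain M where M: "matching E M" "card M = mu V E" using mu_attained by blast
  have "card (I \<inter> \<Union>M) = (\<Sum>e\<in>M. card (I \<inter> e))" by (rule card_inter_Union[OF M(1)])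
  also have "\<dots> \<le> (\<Sum>e\<in>M. 1)"
  proof (rule sum_mono)
    fix e assume "e \<in> M"
    then obtain x y where xy: "E x y" "e = {x, y}" using matching_edge[OF M(1)] by blast
    then have "\<not> (x \<in> I \<and> y \<in> I)" using I(1) unfolding indep_def by blast
    then have "I \<inter> e \<subseteq> {x} \<or> I \<inter> e \<subseteq> {y}" using xy(2) by blast
    then show "card (I \<inter> e) \<le> 1"
    proof
      assume "I \<inter> e \<subseteq> {x}" then have "card (I \<inter> e) \<le> card {x}" by (intro card_mono) auto
      then show ?thesis by simp
    next
      assume "I \<inter> e \<subseteq> {y}" then have "card (I \<inter> e) \<le> card {y}" by (intro card_mono) auto
      then show ?thesis by simp
    qed
  qed
  finally have "card (I \<inter> \<Union>M) \<le> card M" by simp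
  moreover have "I \<subseteq> V" using I(1) unfolding indep_def by blast
  moreover have "card (\<Union>M) \<le> card V" using matching_sub[OF M(1)] finV by (intro card_mono) auto
  ultimately show ?thesis using card_split_M[OF M(1), of I] I(2) M(2) card_Union_M[OF M(1)] by linarith
qed

lemma KE_crit:
  assumes KE: "koenig_egervary V E" and I: "indep V E I" "card I = alpha V E"
  shows "critical_indep V E I"
proof -
  obtain M where M: "matching E M" "card M = mu V E" using mu_attained by blast
  have ke: "alpha V E + mu V E = card V" using KE unfolding koenig_egervary_def .
  have "nbhd E I \<subseteq> V - I" using nbhd_sub indep_nbhd_disj[OF I(1)] by blast
  then have "card (nbhd E I) \<le> card (V - I)" using finV by (intro card_mono) auto
  also have "\<dots> = card V - card I" using I(1) finV unfolding indep_def by (meson card_Diff_subset finite_subset)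
  finally have cN: "card (nbhd E I) \<le> mu V E" using ke I(2) by linarith
  obtain X where X: "X \<subseteq> V" "difference E X = dc" using dc_attained by blast
  have "card X \<le> card (nbhd E X) + (card V - 2 * card M)" by (rule diff_bound[OF M(1) X(1)])
  moreover have "2 * card M \<le> card V"
    using card_Union_M[OF M(1)] matching_sub[OF M(1)] finV card_mono[of V "\<Union>M"] by auto
  ultimately have "dc \<le> difference E I" using X(2) cN ke I(2) M(2) unfolding difference_def by linarith
  then show ?thesis using crit_iff2 I(1) by blast
qed

lemma KE_iff: "koenig_egervary V E \<longleftrightarrow> cc = alpha V E"
proof
  assume KE: "koenig_egervary V E"
  obtain I where I: "indep V E I" "card I = alpha V E" using alpha_attained by blast
  have "critical_indep V E I" using KE_crit[OF KE I] .
  then have "alpha V E \<le> cc" using crit_le_cc I(2) by metis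
  then show "cc = alpha V E" using cc_le_alpha by linarith
next
  assume ca: "cc = alpha V E"
  obtain S where S: "max_critical_indep V E S" using max_crit_exists by blast
  have Sc: "critical_indep V E S" and cS: "card S = cc" using S max_crit_iff by auto
  have indS: "indep V E S" using Sc critical_iff by blast
  obtain m where m: "inj_on m (nbhd E S)" "\<forall>x\<in>nbhd E S. m x \<in> S \<and> E x (m x)"
    using crit_hall[OF Sc] by blast
  have SV: "S \<subseteq> V" using indS unfolding indep_def by blast
  have fS: "finite S" using indS indep_fin by blast
  have NS: "nbhd E S = V - S"
  proof
    show "nbhd E S \<subseteq> V - S" using nbhd_sub indep_nbhd_disj[OF indS] by blast
    show "V - S \<subseteq> nbhd E S"
    proof
      fix v assume v: "v \<in> V - S"
      show "v \<in> nbhd E S"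
      proof (rule ccontr)
        assume nv: "v \<notin> nbhd E S"
        have "indep V E (insert v S)"
          using indS v nv irr esym unfolding indep_def nbhd_def by blast
        then have "card (insert v S) \<le> alpha V E" by (rule indep_le_alpha)
        then show False using v fS cS ca by simp
      qed
    qed
  qed
  define Mt where "Mt = (\<lambda>x. {x, m x}) ` nbhd E S"
  have SN: "S \<inter> nbhd E S = {}" using indep_nbhd_disj indS by blast
  have mt: "matching E Mt"
    unfolding matching_def
  proof (intro conjI ballI impI)
    fix e assume "e \<in> Mt"
    then show "\<exists>x y. E x y \<and> e = {x, y}" using m(2) unfolding Mt_def by blast
  next
    fix e f assume ef: "e \<in> Mt" "f \<in> Mt" "e \<noteq> f"
    then obtain x y where xy: "x \<in> nbhd E S" "y \<in> nbhd E S" "e = {x, m x}" "f = {y, m y}"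
      unfolding Mt_def by blast
    then have "x \<noteq> y" using ef by blast
    then have "m x \<noteq> m y" using m(1) xy by (meson inj_onD)
    moreover have "m x \<in> S" "m y \<in> S" using m(2) xy by auto
    ultimately show "e \<inter> f = {}" using xy SN \<open>x \<noteq> y\<close> by blast
  qed
  have "inj_on (\<lambda>x. {x, m x}) (nbhd E S)"
  proof (rule inj_onI)
    fix x y assume xy: "x \<in> nbhd E S" "y \<in> nbhd E S" "{x, m x} = {y, m y}"
    then have "x \<in> {y, m y}" by blast
    moreover have "m y \<in> S" using m(2) xy by auto
    ultimately show "x = y" using xy SN by blast
  qed
  then have "card Mt = card (nbhd E S)" unfolding Mt_def by (rule card_image)
  also have "\<dots> = card V - card S" unfolding NS using SV finV by (meson card_Diff_subset finite_subset)
  finally have "card V - card S \<le> mu V E" using matching_le_mu[OF mt] by simp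
  then show "koenig_egervary V E" using alpha_mu cS ca unfolding koenig_egervary_def by linarith
qed

end


theorem theorem1p6:
  fixes V :: "'a set" and E :: "'a \<Rightarrow> 'a \<Rightarrow> bool"
  assumes "simple_graph V E"
  shows "(koenig_egervary V E \<longleftrightarrow> diadem V E = corona V E)
       \<and> (diadem V E = corona V E \<longleftrightarrow> card (diadem V E) + card (nucleus V E) = 2 * alpha V E)"
proof -
  interpret sg V E using assms by unfold_locales
  obtain S where S: "max_critical_indep V E S" using max_crit_exists by blast
  have Sc: "critical_indep V E S" using S max_crit_iff by auto
  obtain m where m: "inj_on m (nbhd E S)" "\<forall>x\<in>nbhd E S. m x \<in> S \<and> E x (m x)"
    using crit_hall[OF Sc] by blast
  have ii: "koenig_egervary V E \<longleftrightarrow> diadem V E = corona V E"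
  proof
    assume KE: "koenig_egervary V E"
    then have ca: "cc = alpha V E" using KE_iff by blast
    have "{T. max_critical_indep V E T} = {T. indep V E T \<and> card T = alpha V E}"
    proof (intro Collect_cong iffI)
      fix T assume "max_critical_indep V E T"
      then show "indep V E T \<and> card T = alpha V E" using max_crit_iff critical_iff ca by auto
    next
      fix T assume T: "indep V E T \<and> card T = alpha V E"
      then have "critical_indep V E T" using KE_crit[OF KE] by blast
      then show "max_critical_indep V E T" using max_crit_iff T ca by auto
    qed
    then show "diadem V E = corona V E" unfolding diadem_def corona_def by simp
  next
    assume dc: "diadem V E = corona V E"
    show "koenig_egervary V E"
    proof (rule ccontr)
      assume "\<not> koenig_egervary V E"
      then have "cc < alpha V E" using KE_iff cc_le_alpha by (simp add: order_less_le)
      then show False using corona_outside[OF S m] diadem_sub_X[OF S m] dc by blast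
    qed
  qed
  have iii: "card (diadem V E) + card (nucleus V E) = 2 * alpha V E \<longleftrightarrow> cc = alpha V E"
    using diadem_nucleus by simp
  show ?thesis using ii iii KE_iff by blast
qed


end
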